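(* Let $n\geq 3$ and $\alpha_2,\dots,\alpha_n\in\mathbb{C}$ with $\alpha_2=0$ and $\alpha_3\neq0$. Then the transposed Poisson algebra $\mathbf{TP}(\alpha_2,\dots,\alpha_n)$ is isomorphic to $\mathbf{TP}(0,\alpha,0,\dots,0)$ for some $\alpha\in\mathbb{C}$.
   Context: $\mu_0^n$ is the complex commutative associative algebra with basis $\{e_1,\dots,e_n\}$ and $e_i\cdot e_j=e_{i+j}$ for $2\leq i+j\leq n$, other products zero. For $\alpha_2,\dots,\alpha_n\in\mathbb{C}$, $\mathbf{TP}(\alpha_2,\dots,\alpha_n)$ denotes $\mu_0^n$ with its associative product together with the bracket $[e_i,e_j]=(j-i)\sum_{t=i+j-1}^{n}\alpha_{t-i-j+3}e_t$ for $3\leq i+j\leq n+1$, other brackets of basis elements zero. In $\mathbf{TP}(0,\alpha,0,\dots,0)$ the parameter $\alpha$ is in the position of $\alpha_3$. Isomorphisms preserve both operations. *)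

theory Defs
  imports Complex_Main
begin

text \<open>Vectors of the n-dimensional algebra with basis e_1..e_n are coefficient
functions nat => complex supported on {1..n}; e_i corresponds to the indicator of i.\<close>

definition vec_space :: "nat \<Rightarrow> (nat \<Rightarrow> complex) set" where
  "vec_space n = {x. \<forall>t. (t < 1 \<or> n < t) \<longrightarrow> x t = 0}"

definition mu_mult :: "nat \<Rightarrow> (nat \<Rightarrow> complex) \<Rightarrow> (nat \<Rightarrow> complex) \<Rightarrow> (nat \<Rightarrow> complex)" where
  "mu_mult n x y = (\<lambda>t. if 1 \<le> t \<and> t \<le> n then
      (\<Sum>i\<in>{1..n}. \<Sum>j\<in>{1..n}. if i + j = t then x i * y j else 0) else 0)"

definition tp_bracket :: "nat \<Rightarrow> (nat \<Rightarrow> complex) \<Rightarrow> (nat \<Rightarrow> complex) \<Rightarrow> (nat \<Rightarrow> complex) \<Rightarrow> (nat \<Rightarrow> complex)" where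
  "tp_bracket n \<alpha> x y = (\<lambda>t. if 1 \<le> t \<and> t \<le> n then
      (\<Sum>i\<in>{1..n}. \<Sum>j\<in>{1..n}.
         if 3 \<le> i + j \<and> i + j \<le> n + 1 \<and> i + j - 1 \<le> t
         then of_int (int j - int i) * \<alpha> (t + 3 - (i + j)) * x i * y j else 0) else 0)"

definition tp_iso :: "nat \<Rightarrow> (nat \<Rightarrow> complex) \<Rightarrow> (nat \<Rightarrow> complex) \<Rightarrow>
    ((nat \<Rightarrow> complex) \<Rightarrow> (nat \<Rightarrow> complex)) \<Rightarrow> bool" where
  "tp_iso n \<alpha> \<beta> \<phi> \<longleftrightarrow>
     bij_betw \<phi> (vec_space n) (vec_space n) \<and>
     (\<forall>x\<in>vec_space n. \<forall>y\<in>vec_space n. \<phi> (\<lambda>t. x t + y t) = (\<lambda>t. \<phi> x t + \<phi> y t)) \<and>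
     (\<forall>c. \<forall>x\<in>vec_space n. \<phi> (\<lambda>t. c * x t) = (\<lambda>t. c * \<phi> x t)) \<and>
     (\<forall>x\<in>vec_space n. \<forall>y\<in>vec_space n. \<phi> (mu_mult n x y) = mu_mult n (\<phi> x) (\<phi> y)) \<and>
     (\<forall>x\<in>vec_space n. \<forall>y\<in>vec_space n. \<phi> (tp_bracket n \<alpha> x y) = tp_bracket n \<beta> (\<phi> x) (\<phi> y))"

definition tp_isomorphic :: "nat \<Rightarrow> (nat \<Rightarrow> complex) \<Rightarrow> (nat \<Rightarrow> complex) \<Rightarrow> bool" where
  "tp_isomorphic n \<alpha> \<beta> \<longleftrightarrow> (\<exists>\<phi>. tp_iso n \<alpha> \<beta> \<phi>)"

end

theory Submission
  imports Defs "HOL-Computational_Algebra.Formal_Power_Series"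
begin
unbundle fps_syntax

lemma core:
  fixes A :: "complex fps"
  assumes A0: "A $ 0 = 0" and A1: "A $ 1 \<noteq> 0"
  shows "\<exists>u v. u $ 0 = 0 \<and> v $ 0 = 0 \<and> u oo v = fps_X \<and> v oo u = fps_X \<and>
           A oo u = fps_const (A $ 1) * fps_X * fps_deriv u"
proof -
  define a where "a = A $ 1"
  define B where "B = Abs_fps (\<lambda>m. A $ (m+1))"
  have AB: "A = fps_X * B"
    by (rule fps_ext) (simp add: B_def A0)
  have B0: "B $ 0 = a" by (simp add: B_def a_def)
  have a0: "a \<noteq> 0" using A1 a_def by simp
  define D where "D = fps_const a * inverse B - 1"
  have D0: "D $ 0 = 0" using a0 by (simp add: D_def B0)
  define C where "C = Abs_fps (\<lambda>m. D $ (m+1))"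
  have XC: "fps_X * C = D"
    by (rule fps_ext) (simp add: C_def D0)
  define H where "H = fps_integral C 0"
  have H0: "H $ 0 = 0" by (simp add: H_def)
  have dH: "fps_deriv H = C" by (simp add: H_def fps_deriv_fps_integral)
  define E where "E = fps_exp 1 oo H"
  have E0: "E $ 0 = 1" by (simp add: E_def)
  have dE: "fps_deriv E = E * C"
    by (simp add: E_def fps_compose_deriv H0 dH)
  define v where "v = fps_X * E"
  have v0: "v $ 0 = 0" by (simp add: v_def)
  have v1: "v $ 1 \<noteq> 0" by (simp add: v_def E0)
  have dv: "fps_deriv v = E * (1 + D)"
    by (simp add: v_def dE XC[symmetric] algebra_simps)
  have BinvB: "B * inverse B = 1" using B0 a0 by (intro inverse_mult_eq_1') simp
  have key: "A * fps_deriv v = fps_const a * v"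
  proof -
    have "A * fps_deriv v = fps_X * E * (fps_const a * (B * inverse B))"
      by (simp add: AB dv D_def algebra_simps)
    also have "\<dots> = fps_const a * v" by (simp add: BinvB v_def algebra_simps)
    finally show ?thesis .
  qed
  define u where "u = fps_inv v"
  have u0: "u $ 0 = 0" by (simp add: u_def fps_inv_def)
  have uv: "u oo v = fps_X" unfolding u_def by (rule fps_inv[OF v0 v1])
  have vu: "v oo u = fps_X" unfolding u_def by (rule fps_inv_right[OF v0 v1])
  have c1: "(A oo u) * (fps_deriv v oo u) = fps_const a * fps_X"
  proof -
    have "(A * fps_deriv v) oo u = (fps_const a * v) oo u" using key by simp
    then show ?thesis
      by (simp add: fps_compose_mult_distrib[OF u0] vu)
  qed
  have c2: "(fps_deriv v oo u) * fps_deriv u = 1"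
  proof -
    have "fps_deriv (v oo u) = 1" using vu by simp
    then show ?thesis by (simp add: fps_compose_deriv[OF u0])
  qed
  have "A oo u = (A oo u) * ((fps_deriv v oo u) * fps_deriv u)" using c2 by simp
  also have "\<dots> = fps_const a * fps_X * fps_deriv u"
    by (metis c1 mult.assoc)
  finally show ?thesis using u0 v0 uv vu a_def by blast
qed

definition Vf :: "nat \<Rightarrow> complex fps \<Rightarrow> (nat \<Rightarrow> complex)" where
  "Vf n f = (\<lambda>t. if 1 \<le> t \<and> t \<le> n then f $ t else 0)"

definition Aal :: "(nat \<Rightarrow> complex) \<Rightarrow> complex fps" where
  "Aal al = Abs_fps (\<lambda>m. al (m+2))"

definition Wr :: "complex fps \<Rightarrow> complex fps \<Rightarrow> complex fps" where
  "Wr f g = f * fps_deriv g - fps_deriv f * g"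

definition agree :: "nat \<Rightarrow> complex fps \<Rightarrow> complex fps \<Rightarrow> bool" where
  "agree n f g \<longleftrightarrow> (\<forall>t\<le>n. f $ t = g $ t)"

lemma vec0: "x \<in> vec_space n \<Longrightarrow> x 0 = 0"
  by (simp add: vec_space_def)

lemma vecgt: "x \<in> vec_space n \<Longrightarrow> n < t \<Longrightarrow> x t = 0"
  by (simp add: vec_space_def)

lemma Vf_vec: "Vf n f \<in> vec_space n"
  by (simp add: vec_space_def Vf_def)

lemma Vf_Abs: "x \<in> vec_space n \<Longrightarrow> Vf n (Abs_fps x) = x"
  by (auto simp: Vf_def vec_space_def fun_eq_iff Suc_le_eq)

lemma Fv_sum:
  assumes "x \<in> vec_space n"
  shows "Abs_fps x = (\<Sum>i\<in>{1..n}. fps_const (x i) * fps_X ^ i)"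
proof (rule fps_ext)
  fix t
  have "(\<Sum>i\<in>{1..n}. fps_const (x i) * fps_X ^ i) $ t = (\<Sum>i\<in>{1..n}. if t = i then x i else 0)"
    unfolding fps_sum_nth by (intro sum.cong) auto
  also have "\<dots> = (if t \<in> {1..n} then x t else 0)"
    by (simp add: sum.delta)
  also have "\<dots> = x t" using assms by (auto simp: vec_space_def Suc_le_eq)
  finally show "Abs_fps x $ t = (\<Sum>i\<in>{1..n}. fps_const (x i) * fps_X ^ i) $ t" by simp
qed

lemma mu_fps:
  assumes x: "x \<in> vec_space n" and y: "y \<in> vec_space n"
  shows "mu_mult n x y = Vf n (Abs_fps x * Abs_fps y)"
proof (rule ext)
  fix t
  have prod: "Abs_fps x * Abs_fps y = (\<Sum>i\<in>{1..n}. \<Sum>j\<in>{1..n}. fps_const (x i * y j) * fps_X ^ (i + j))"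
    unfolding Fv_sum[OF x] Fv_sum[OF y] sum_product
    by (intro sum.cong refl) (simp add: power_add algebra_simps)
  have "(Abs_fps x * Abs_fps y) $ t = (\<Sum>i\<in>{1..n}. \<Sum>j\<in>{1..n}. if i + j = t then x i * y j else 0)"
    unfolding prod fps_sum_nth fps_mult_left_const_nth fps_X_power_nth by (intro sum.cong refl) auto
  then show "mu_mult n x y t = Vf n (Abs_fps x * Abs_fps y) t"
    by (simp add: mu_mult_def Vf_def)
qed

lemma P1: assumes j: "1 \<le> j" shows "((fps_X :: complex fps) ^ i * fps_deriv (fps_X ^ j)) $ t = (if t = i + j - 1 then of_nat j else 0)"
proof -
  have "((fps_X :: complex fps) ^ i * fps_deriv (fps_X ^ j)) $ t = (if t < i then 0 else of_nat (t - i + 1) * (if t - i + 1 = j then 1 else 0))"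
    unfolding fps_X_power_mult_nth fps_deriv_nth fps_X_power_nth by simp
  also have "\<dots> = (if t = i + j - 1 then of_nat j else 0)"
    using j by (cases "t = i + j - 1") auto
  finally show ?thesis .
qed
lemma P2: assumes i: "1 \<le> i" shows "(fps_deriv ((fps_X :: complex fps) ^ i) * fps_X ^ j) $ t = (if t = i + j - 1 then of_nat i else 0)"
proof -
  have "(fps_deriv ((fps_X :: complex fps) ^ i) * fps_X ^ j) $ t = (if t < j then 0 else of_nat (t - j + 1) * (if t - j + 1 = i then 1 else 0))"
    unfolding fps_X_power_mult_right_nth fps_deriv_nth fps_X_power_nth by simp
  also have "\<dots> = (if t = i + j - 1 then of_nat i else 0)"
    using i by (cases "t = i + j - 1") auto
  finally show ?thesis .
qed

lemma Wr_XX: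
  assumes "1 \<le> i" "1 \<le> j"
  shows "Wr (fps_X ^ i) (fps_X ^ j) = fps_const (of_int (int j - int i)) * (fps_X :: complex fps) ^ (i + j - 1)"
proof (rule fps_ext)
  fix t
  show "Wr (fps_X ^ i) (fps_X ^ j) $ t = (fps_const (of_int (int j - int i)) * (fps_X :: complex fps) ^ (i + j - 1)) $ t"
    unfolding Wr_def fps_sub_nth P1[OF assms(2)] P2[OF assms(1)] by simp
qed

lemma Wr_bilin:
  fixes c d :: "nat \<Rightarrow> complex" and f g :: "nat \<Rightarrow> complex fps"
  shows "Wr (\<Sum>i\<in>S. fps_const (c i) * f i) (\<Sum>j\<in>T. fps_const (d j) * g j) =
    (\<Sum>i\<in>S. \<Sum>j\<in>T. fps_const (c i * d j) * Wr (f i) (g j))"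
proof -
  have "Wr (\<Sum>i\<in>S. fps_const (c i) * f i) (\<Sum>j\<in>T. fps_const (d j) * g j) =
     (\<Sum>i\<in>S. \<Sum>j\<in>T. (fps_const (c i) * f i) * (fps_const (d j) * fps_deriv (g j)))
   - (\<Sum>i\<in>S. \<Sum>j\<in>T. (fps_const (c i) * fps_deriv (f i)) * (fps_const (d j) * g j))"
    unfolding Wr_def fps_deriv_sum fps_deriv_mult_const_left sum_product ..
  also have "\<dots> = (\<Sum>i\<in>S. \<Sum>j\<in>T. (fps_const (c i) * f i) * (fps_const (d j) * fps_deriv (g j))
      - (fps_const (c i) * fps_deriv (f i)) * (fps_const (d j) * g j))"
    by (simp add: sum_subtractf)
  also have "\<dots> = (\<Sum>i\<in>S. \<Sum>j\<in>T. fps_const (c i * d j) * Wr (f i) (g j))"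
    by (intro sum.cong refl) (simp add: Wr_def algebra_simps flip: fps_const_mult)
  finally show ?thesis .
qed

lemma br_fps:
  assumes x: "x \<in> vec_space n" and y: "y \<in> vec_space n"
  shows "tp_bracket n al x y = Vf n (Aal al * Wr (Abs_fps x) (Abs_fps y))"
proof (rule ext)
  fix t
  have W: "Aal al * Wr (Abs_fps x) (Abs_fps y) = (\<Sum>i\<in>{1..n}. \<Sum>j\<in>{1..n}.
      fps_const (x i * y j * of_int (int j - int i)) * (Aal al * fps_X ^ (i + j - 1)))"
  proof -
    have "Aal al * (fps_const (x i * y j) * Wr (fps_X ^ i) (fps_X ^ j)) =
      fps_const (x i * y j * of_int (int j - int i)) * (Aal al * fps_X ^ (i + j - 1))"
      if "i \<in> {1..n}" "j \<in> {1..n}" for i j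
    proof -
      have "Wr (fps_X ^ i) (fps_X ^ j) = fps_const (of_int (int j - int i)) * fps_X ^ (i + j - 1)"
        using that by (intro Wr_XX) auto
      then show ?thesis by (simp only: fps_const_mult[symmetric] mult_ac)
    qed
    then show ?thesis
      unfolding Fv_sum[OF x] Fv_sum[OF y] Wr_bilin sum_distrib_left
      by (intro sum.cong refl) auto
  qed
  have "(Aal al * Wr (Abs_fps x) (Abs_fps y)) $ t = (\<Sum>i\<in>{1..n}. \<Sum>j\<in>{1..n}.
      x i * y j * of_int (int j - int i) * (if t < i + j - 1 then 0 else al (t - (i + j - 1) + 2)))"
    unfolding W fps_sum_nth fps_mult_left_const_nth fps_X_power_mult_right_nth
    by (intro sum.cong refl) (simp add: Aal_def)
  also have "\<dots> = (\<Sum>i\<in>{1..n}. \<Sum>j\<in>{1..n}.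
         if 3 \<le> i + j \<and> i + j \<le> n + 1 \<and> i + j - 1 \<le> t
         then of_int (int j - int i) * al (t + 3 - (i + j)) * x i * y j else 0)" 
    if tr: "1 \<le> t \<and> t \<le> n"
  proof -
    have "x i * y j * of_int (int j - int i) * (if t < i + j - 1 then 0 else al (t - (i + j - 1) + 2))
       = (if 3 \<le> i + j \<and> i + j \<le> n + 1 \<and> i + j - 1 \<le> t
         then of_int (int j - int i) * al (t + 3 - (i + j)) * x i * y j else 0)"
      if ij: "i \<in> {1..n}" "j \<in> {1..n}" for i j
    proof (cases "t < i + j - 1")
      case True
      then show ?thesis by auto
    next
      case False
      show ?thesis
      proof (cases "3 \<le> i + j")
        case True
        have "i + j \<le> n + 1" using False tr by linarith
        moreover have "t - (i + j - 1) + 2 = t + 3 - (i + j)" using False ij by auto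
        ultimately show ?thesis using False True by simp
      next
        case F2: False
        then have "i = 1" "j = 1" using ij by auto
        then show ?thesis by simp
      qed
    qed
    then show ?thesis by (intro sum.cong refl) blast
  qed
  finally have fin: "1 \<le> t \<and> t \<le> n \<Longrightarrow> (Aal al * Wr (Abs_fps x) (Abs_fps y)) $ t = (\<Sum>i\<in>{1..n}. \<Sum>j\<in>{1..n}.
         if 3 \<le> i + j \<and> i + j \<le> n + 1 \<and> i + j - 1 \<le> t
         then of_int (int j - int i) * al (t + 3 - (i + j)) * x i * y j else 0)" .
  show "tp_bracket n al x y t = Vf n (Aal al * Wr (Abs_fps x) (Abs_fps y)) t"
    unfolding tp_bracket_def Vf_def using fin by simp
qed

lemma agree_refl: "agree n f f" by (simp add: agree_def)
lemma agree_sym: "agree n f g \<Longrightarrow> agree n g f" by (simp add: agree_def)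
lemma agree_trans: "agree n f g \<Longrightarrow> agree n g h \<Longrightarrow> agree n f h" by (simp add: agree_def)

lemma agree_Vf: "f $ 0 = 0 \<Longrightarrow> agree n (Abs_fps (Vf n f)) f"
  by (auto simp: agree_def Vf_def Suc_le_eq)

lemma agree_mult: "agree n f f' \<Longrightarrow> agree n g g' \<Longrightarrow> agree n (f * g) (f' * g')"
  unfolding agree_def fps_mult_nth by (auto intro!: sum.cong)

lemma agree_sub: "agree n f f' \<Longrightarrow> agree n g g' \<Longrightarrow> agree n (f - g) (f' - g')"
  unfolding agree_def by auto

lemma agree_compose: "agree n f g \<Longrightarrow> agree n (f oo u) (g oo u)"
  unfolding agree_def fps_compose_nth by (auto intro!: sum.cong)

lemma agree_Vf_eq: "agree n f g \<Longrightarrow> Vf n f = Vf n g"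
  unfolding agree_def Vf_def by auto

lemma agree_Xderiv: "agree n f g \<Longrightarrow> agree n (fps_X * fps_deriv f) (fps_X * fps_deriv g)"
  unfolding agree_def by auto

lemma Abs_add: "Abs_fps (\<lambda>t. x t + y t) = Abs_fps x + Abs_fps y"
  by (rule fps_ext) simp

lemma Abs_smult: "Abs_fps (\<lambda>t. (c::complex) * x t) = fps_const c * Abs_fps x"
  by (rule fps_ext) simp

lemma Vf_add: "Vf n (f + g) = (\<lambda>t. Vf n f t + Vf n g t)"
  by (auto simp: Vf_def)

lemma Vf_smult: "Vf n (fps_const c * f) = (\<lambda>t. c * Vf n f t)"
  by (auto simp: Vf_def)

lemma inv_lemma:
  assumes x: "x \<in> vec_space n" and u0: "u $ 0 = 0" and v0: "v $ 0 = 0" and uv: "u oo v = fps_X"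
  shows "Vf n (Abs_fps (Vf n (Abs_fps x oo u)) oo v) = x"
proof -
  have h0: "(Abs_fps x oo u) $ 0 = 0" using vec0[OF x] by simp
  have "Vf n (Abs_fps (Vf n (Abs_fps x oo u)) oo v) = Vf n ((Abs_fps x oo u) oo v)"
    by (intro agree_Vf_eq agree_compose agree_Vf h0)
  also have "\<dots> = Vf n (Abs_fps x oo (u oo v))" by (simp add: fps_compose_assoc[OF v0 u0])
  also have "\<dots> = x" by (simp add: uv Vf_Abs[OF x])
  finally show ?thesis .
qed

theorem mainTheorem8:
  fixes n :: nat and \<alpha> :: "nat \<Rightarrow> complex"
  assumes "n \<ge> 3" and "\<alpha> 2 = 0" and "\<alpha> 3 \<noteq> 0"
  shows "\<exists>a :: complex. tp_isomorphic n \<alpha> (\<lambda>k. if k = 3 then a else 0)"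
proof -
  define A where "A = Aal \<alpha>"
  define a where "a = \<alpha> 3"
  define \<beta> where "\<beta> = (\<lambda>k::nat. if k = 3 then a else (0::complex))"
  have A0: "A $ 0 = 0" using assms(2) by (simp add: A_def Aal_def numeral_2_eq_2)
  have A1: "A $ 1 = a" by (simp add: A_def Aal_def a_def numeral_3_eq_3)
  obtain u v where u0: "u $ 0 = 0" and v0: "v $ 0 = 0" and uv: "u oo v = fps_X"
    and vu: "v oo u = fps_X" and key: "A oo u = fps_const a * fps_X * fps_deriv u"
    using core[OF A0] A1 assms(3) a_def by metis
  have Ab: "Aal \<beta> = fps_const a * fps_X"
    by (rule fps_ext) (simp add: Aal_def \<beta>_def fps_X_nth numeral_3_eq_3)
  define \<phi> where "\<phi> x = Vf n (Abs_fps x oo u)" for x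
  define \<psi> where "\<psi> x = Vf n (Abs_fps x oo v)" for x
  have bij: "bij_betw \<phi> (vec_space n) (vec_space n)"
    by (rule bij_betw_byWitness[where f'=\<psi>])
      (auto simp: \<phi>_def \<psi>_def inv_lemma u0 v0 uv vu Vf_vec)
  have add: "\<phi> (\<lambda>t. x t + y t) = (\<lambda>t. \<phi> x t + \<phi> y t)" for x y
    by (simp add: \<phi>_def Abs_add fps_compose_add_distrib Vf_add)
  have smult: "\<phi> (\<lambda>t. c * x t) = (\<lambda>t. c * \<phi> x t)" for c x
    by (simp add: \<phi>_def Abs_smult fps_const_mult_apply_left[symmetric] Vf_smult)
  have agu: "agree n (Abs_fps (\<phi> x)) (Abs_fps x oo u)" if "x \<in> vec_space n" for x
    unfolding \<phi>_def by (rule agree_Vf) (simp add: vec0[OF that])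
  have mult: "\<phi> (mu_mult n x y) = mu_mult n (\<phi> x) (\<phi> y)"
    if x: "x \<in> vec_space n" and y: "y \<in> vec_space n" for x y
  proof -
    have h0: "(Abs_fps x * Abs_fps y) $ 0 = 0" by (simp add: vec0[OF x])
    have "\<phi> (mu_mult n x y) = Vf n ((Abs_fps x * Abs_fps y) oo u)"
      unfolding mu_fps[OF x y] \<phi>_def by (intro agree_Vf_eq agree_compose agree_Vf h0)
    also have "\<dots> = Vf n ((Abs_fps x oo u) * (Abs_fps y oo u))"
      by (simp add: fps_compose_mult_distrib[OF u0])
    also have "\<dots> = Vf n (Abs_fps (\<phi> x) * Abs_fps (\<phi> y))"
      by (rule agree_Vf_eq, rule agree_sym, intro agree_mult agu x y)
    also have "\<dots> = mu_mult n (\<phi> x) (\<phi> y)"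
      by (simp add: mu_fps \<phi>_def Vf_vec)
    finally show ?thesis .
  qed
  have br: "\<phi> (tp_bracket n \<alpha> x y) = tp_bracket n \<beta> (\<phi> x) (\<phi> y)"
    if x: "x \<in> vec_space n" and y: "y \<in> vec_space n" for x y
  proof -
    define F where "F = Abs_fps x"
    define G where "G = Abs_fps y"
    define P where "P = F oo u"
    define Q where "Q = G oo u"
    have h0: "(A * Wr F G) $ 0 = 0" by (simp add: A0)
    have chain: "Wr P Q = (Wr F G oo u) * fps_deriv u"
      unfolding P_def Q_def Wr_def fps_compose_deriv[OF u0] fps_compose_sub_distrib
        fps_compose_mult_distrib[OF u0]
      by (simp add: algebra_simps)
    have "\<phi> (tp_bracket n \<alpha> x y) = Vf n ((A * Wr F G) oo u)"
      unfolding br_fps[OF x y] \<phi>_def A_def[symmetric] F_def[symmetric] G_def[symmetric]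
      by (intro agree_Vf_eq agree_compose agree_Vf h0)
    also have "\<dots> = Vf n (fps_const a * (P * (fps_X * fps_deriv Q) - (fps_X * fps_deriv P) * Q))"
    proof -
      have "(A * Wr F G) oo u = fps_const a * (P * (fps_X * fps_deriv Q) - (fps_X * fps_deriv P) * Q)"
        using chain unfolding fps_compose_mult_distrib[OF u0] key
        by (simp add: Wr_def algebra_simps)
      then show ?thesis by simp
    qed
    also have "\<dots> = Vf n (fps_const a * (Abs_fps (\<phi> x) * (fps_X * fps_deriv (Abs_fps (\<phi> y)))
        - (fps_X * fps_deriv (Abs_fps (\<phi> x))) * Abs_fps (\<phi> y)))"
      unfolding P_def Q_def F_def G_def
      by (rule agree_Vf_eq, rule agree_sym, intro agree_mult agree_sub agree_Xderiv agu x y agree_refl)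
    also have "\<dots> = Vf n (Aal \<beta> * Wr (Abs_fps (\<phi> x)) (Abs_fps (\<phi> y)))"
      by (simp add: Ab Wr_def algebra_simps)
    also have "\<dots> = tp_bracket n \<beta> (\<phi> x) (\<phi> y)"
      by (simp add: br_fps \<phi>_def Vf_vec)
    finally show ?thesis .
  qed
  have "tp_iso n \<alpha> \<beta> \<phi>"
    unfolding tp_iso_def using bij add smult mult br by blast
  then show ?thesis unfolding tp_isomorphic_def \<beta>_def by blast
qed

end
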